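(* Let $T:\mathbb{R}_+^N\to\mathbb{R}_{++}^N$ be a continuous standard interference mapping, let $\|\cdot\|_a$ and $\|\cdot\|_b$ be monotone norms on $\mathbb{R}^N$, and let $U$, $P$, $E$ be the utility, power and $\|\cdot\|_b$-energy efficiency functions defined in the context. Let $T_\infty$ be the asymptotic mapping of $T$. Assume that the conditional eigenvalue problem "find $(\mathbf{x},\lambda)\in\mathbb{R}_+^N\times\mathbb{R}_+$ such that $T_\infty(\mathbf{x})=\lambda\mathbf{x}$ and $\|\mathbf{x}\|_a=1$" has a unique solution, denoted $(\mathbf{x}_\infty,\lambda_\infty)$, and that it lies in $\mathbb{R}_{++}^N\times\mathbb{R}_{++}$. Then: (i) $\sup_{\bar p>0}U(\bar p)=\lim_{\bar p\to\infty}U(\bar p)=1/\lambda_\infty$ and $\sup_{\bar p>0}E(\bar p)=\lim_{\bar p\to 0^+}E(\bar p)=1/\|T(\mathbf{0})\|_b$. (ii) For every $\bar p\in\mathbb{R}_{++}$, $U(\bar p)\le \bar p/\|T(\mathbf{0})\|_a$ if $\bar p\le \|T(\mathbf{0})\|_a/\lambda_\infty$, and $U(\bar p)\le 1/\lambda_\infty$ otherwise. (iii) For every $\bar p\in\mathbb{R}_{++}$, $E(\bar p)\le\min\{1/\|T(\mathbf{0})\|_b,\ \alpha/(\lambda_\infty\bar p)\}$, where $\alpha\in\mathbb{R}_{++}$ is any scalar such that $\|\mathbf{x}\|_a\le\alpha\|\mathbf{x}\|_b$ for all $\mathbf{x}\in\mathbb{R}^N$. (iv) As $\bar p\to\infty$,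 $U(\bar p)\in\Theta(1)$ and $E(\bar p)\in\Theta(1/\bar p)$ (Bachmann–Landau big theta).
   Context: Vector inequalities are coordinatewise; $\mathbb{R}_+$, $\mathbb{R}_{++}$ denote nonnegative and positive reals. A norm $\|\cdot\|$ on $\mathbb{R}^N$ is monotone if $\mathbf{0}\le\mathbf{x}\le\mathbf{y}$ implies $\|\mathbf{x}\|\le\|\mathbf{y}\|$. A function $f:\mathbb{R}^N\to\mathbb{R}_{++}\cup\{\infty\}$ is a standard interference function if: (1) for all $\mathbf{x}\in\mathbb{R}_+^N$ and all $\alpha>1$, $\alpha f(\mathbf{x})>f(\alpha\mathbf{x})$; (2) for all $\mathbf{x}_1,\mathbf{x}_2\in\mathbb{R}_+^N$, $\mathbf{x}_1\ge\mathbf{x}_2$ implies $f(\mathbf{x}_1)\ge f(\mathbf{x}_2)$; (3) $f(\mathbf{x})=\infty$ iff $\mathbf{x}\notin\mathbb{R}_+^N$. A standard interference mapping is $T:\mathbb{R}_+^N\to\mathbb{R}_{++}^N$, $T(\mathbf{x})=(t_1(\mathbf{x}),\dots,t_N(\mathbf{x}))$, with each $t_i$ a standard interference function. For a proper function $f:\mathbb{R}^N\to\mathbb{R}\cup\{\infty\}$, its asymptotic function is $f_\infty(\mathbf{x})=\inf\{\liminf_{n\to\infty} f(h_n\mathbf{x}_n)/h_n : h_n\to\infty,\ \mathbf{x}_n\to\mathbf{x}\}$ (equivalently $\liminf_{h\to\infty,\mathbf{y}\to\mathbf{x}} f(h\mathbf{y})/h$). The asymptotic mapping of $T$ is $T_\infty:\mathbb{R}_+^N\to\mathbb{R}_+^N$,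 $T_\infty(\mathbf{x})=((t_1)_\infty(\mathbf{x}),\dots,(t_N)_\infty(\mathbf{x}))$. For a power budget $\bar p>0$, consider the problem: maximize $c$ over $(\mathbf{p},c)\in\mathbb{R}_+^N\times\mathbb{R}_{++}$ subject to $\mathbf{p}=cT(\mathbf{p})$ and $\|\mathbf{p}\|_a\le\bar p$. It is known that this problem has a unique solution $(\mathbf{p}_{\bar p},c_{\bar p})\in\mathbb{R}_{++}^N\times\mathbb{R}_{++}$, and that it satisfies $T(\mathbf{p}_{\bar p})=(1/c_{\bar p})\mathbf{p}_{\bar p}$ and $\|\mathbf{p}_{\bar p}\|_a=\bar p$. Define $U(\bar p):=c_{\bar p}$, $P(\bar p):=\mathbf{p}_{\bar p}$, and $E(\bar p):=U(\bar p)/\|P(\bar p)\|_b$ (which equals $1/\|T(\mathbf{p}_{\bar p})\|_b$). *)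

theory Defs
  imports "HOL-Analysis.Analysis" "HOL-Library.Landau_Symbols"
begin

text \<open>Vectors in R^N are modelled as real^'n; the order on vectors is coordinatewise
(x \<le> y iff all coordinates \<le>). So 0 \<le> x means x in R_+^N; membership in R_++^N
is written with explicit coordinates.\<close>

definition is_norm :: "(real^'n \<Rightarrow> real) \<Rightarrow> bool" where
  "is_norm nm \<longleftrightarrow> (\<forall>x. 0 \<le> nm x) \<and> (\<forall>x. nm x = 0 \<longleftrightarrow> x = 0)
     \<and> (\<forall>c x. nm (c *\<^sub>R x) = \<bar>c\<bar> * nm x) \<and> (\<forall>x y. nm (x + y) \<le> nm x + nm y)"

definition monotone_norm :: "(real^'n \<Rightarrow> real) \<Rightarrow> bool" where
  "monotone_norm nm \<longleftrightarrow> is_norm nm \<and> (\<forall>x y. 0 \<le> x \<and> x \<le> y \<longrightarrow> nm x \<le> nm y)"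

text \<open>A standard interference function, given by its (finite, positive) values on R_+^N;
its value outside R_+^N is +\<infinity> by convention (property (3)).\<close>
definition std_interference_fun :: "(real^'n \<Rightarrow> real) \<Rightarrow> bool" where
  "std_interference_fun f \<longleftrightarrow>
     (\<forall>x. 0 \<le> x \<longrightarrow> 0 < f x) \<and>
     (\<forall>x \<alpha>. 0 \<le> x \<and> \<alpha> > 1 \<longrightarrow> \<alpha> * f x > f (\<alpha> *\<^sub>R x)) \<and>
     (\<forall>x1 x2. 0 \<le> x2 \<and> x2 \<le> x1 \<longrightarrow> f x2 \<le> f x1)"

definition std_interference_map :: "(real^'n \<Rightarrow> real^'n) \<Rightarrow> bool" where
  "std_interference_map T \<longleftrightarrow> (\<forall>i. std_interference_fun (\<lambda>x. T x $ i))"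

definition ext_fun :: "(real^'n \<Rightarrow> real) \<Rightarrow> real^'n \<Rightarrow> ereal" where
  "ext_fun f y = (if 0 \<le> y then ereal (f y) else \<infinity>)"

definition asymptotic_fun :: "(real^'n \<Rightarrow> real) \<Rightarrow> real^'n \<Rightarrow> ereal" where
  "asymptotic_fun f x =
     Liminf (at_top \<times>\<^sub>F nhds x) (\<lambda>(h, y). ext_fun f (h *\<^sub>R y) / ereal h)"

text \<open>Asymptotic mapping on R_+^N (its components are finite there for standard
interference functions).\<close>
definition asymptotic_map :: "(real^'n \<Rightarrow> real^'n) \<Rightarrow> real^'n \<Rightarrow> real^'n" where
  "asymptotic_map T x = (\<chi> i. real_of_ereal (asymptotic_fun (\<lambda>y. T y $ i) x))"

definition feasible :: "(real^'n \<Rightarrow> real^'n) \<Rightarrow> (real^'n \<Rightarrow> real) \<Rightarrow> real \<Rightarrow> real^'n \<Rightarrow> real \<Rightarrow> bool" where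
  "feasible T na pbar p c \<longleftrightarrow> 0 \<le> p \<and> 0 < c \<and> p = c *\<^sub>R T p \<and> na p \<le> pbar"

definition opt_solution :: "(real^'n \<Rightarrow> real^'n) \<Rightarrow> (real^'n \<Rightarrow> real) \<Rightarrow> real \<Rightarrow> (real^'n) \<times> real \<Rightarrow> bool" where
  "opt_solution T na pbar s \<longleftrightarrow> feasible T na pbar (fst s) (snd s) \<and>
     (\<forall>p c. feasible T na pbar p c \<longrightarrow> c \<le> snd s)"

definition Util :: "(real^'n \<Rightarrow> real^'n) \<Rightarrow> (real^'n \<Rightarrow> real) \<Rightarrow> real \<Rightarrow> real" where
  "Util T na pbar = snd (THE s. opt_solution T na pbar s)"

definition PowV :: "(real^'n \<Rightarrow> real^'n) \<Rightarrow> (real^'n \<Rightarrow> real) \<Rightarrow> real \<Rightarrow> real^'n" where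
  "PowV T na pbar = fst (THE s. opt_solution T na pbar s)"

definition EE :: "(real^'n \<Rightarrow> real^'n) \<Rightarrow> (real^'n \<Rightarrow> real) \<Rightarrow> (real^'n \<Rightarrow> real) \<Rightarrow> real \<Rightarrow> real" where
  "EE T na nb pbar = Util T na pbar / nb (PowV T na pbar)"

end

theory Submission
  imports Defs
begin

lemma sim_pos: "std_interference_map T \<Longrightarrow> 0 \<le> x \<Longrightarrow> 0 < T x $ i"
  unfolding std_interference_map_def std_interference_fun_def by blast

lemma sim_mono: "std_interference_map T \<Longrightarrow> 0 \<le> x2 \<Longrightarrow> x2 \<le> x1 \<Longrightarrow> T x2 $ i \<le> T x1 $ i"
  unfolding std_interference_map_def std_interference_fun_def by blast

lemma sim_scal_strict: "std_interference_map T \<Longrightarrow> 0 \<le> x \<Longrightarrow> 1 < a \<Longrightarrow> T (a *\<^sub>R x) $ i < a * T x $ i"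
  unfolding std_interference_map_def std_interference_fun_def by blast

lemma sim_scal: "std_interference_map T \<Longrightarrow> 0 \<le> x \<Longrightarrow> 1 \<le> a \<Longrightarrow> T (a *\<^sub>R x) $ i \<le> a * T x $ i"
  using sim_scal_strict[of T x a i] by (cases "a = 1") auto

lemma sim_pos_vec: "std_interference_map T \<Longrightarrow> 0 \<le> x \<Longrightarrow> 0 \<le> T x"
  using sim_pos[of T x] by (simp add: less_eq_vec_def[of 0 "T x"] less_imp_le)

lemma isn_scale: "is_norm nm \<Longrightarrow> nm (c *\<^sub>R x) = \<bar>c\<bar> * nm x"
  unfolding is_norm_def by blast
lemma isn_nonneg: "is_norm nm \<Longrightarrow> 0 \<le> nm x"
  unfolding is_norm_def by blast
lemma isn_zero: "is_norm nm \<Longrightarrow> nm x = 0 \<longleftrightarrow> x = 0"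
  unfolding is_norm_def by blast
lemma isn_tri: "is_norm nm \<Longrightarrow> nm (x + y) \<le> nm x + nm y"
  unfolding is_norm_def by blast
lemma isn_pos: "is_norm nm \<Longrightarrow> x \<noteq> 0 \<Longrightarrow> 0 < nm x"
  using isn_nonneg isn_zero by (metis order_le_less)

lemma isn_cont: assumes "is_norm nm" shows "continuous_on UNIV nm"
proof (rule convex_on_continuous)
  show "convex_on UNIV nm"
  proof (rule convex_onI)
    fix t :: real and x y :: "real^'a" assume t: "0 < t" "t < 1"
    have "nm ((1 - t) *\<^sub>R x + t *\<^sub>R y) \<le> nm ((1 - t) *\<^sub>R x) + nm (t *\<^sub>R y)"
      by (rule isn_tri[OF assms])
    also have "\<dots> = (1 - t) * nm x + t * nm y" using t by (simp add: isn_scale[OF assms])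
    finally show "nm ((1 - t) *\<^sub>R x + t *\<^sub>R y) \<le> (1 - t) * nm x + t * nm y" .
  qed simp
qed simp

lemma mn_norm: "monotone_norm nm \<Longrightarrow> is_norm nm" unfolding monotone_norm_def by blast
lemma mn_mono: "monotone_norm nm \<Longrightarrow> 0 \<le> x \<Longrightarrow> x \<le> y \<Longrightarrow> nm x \<le> nm y"
  unfolding monotone_norm_def by blast

lemma axis_pos: assumes "monotone_norm nm" shows "0 < nm (axis i (1::real))"
  using isn_pos[OF mn_norm[OF assms]] by (metis axis_nth zero_index zero_neq_one)

lemma comp_le: assumes nm: "monotone_norm nm" and x: "0 \<le> x"
  shows "x $ i * nm (axis i 1) \<le> nm x"
proof -
  have "axis i (x$i) = (x$i) *\<^sub>R axis i (1::real)"
    by (simp add: vec_eq_iff axis_def)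
  moreover have "0 \<le> axis i (x$i)" "axis i (x$i) \<le> x" using x
    by (auto simp: less_eq_vec_def axis_def)
  ultimately have "nm ((x$i) *\<^sub>R axis i 1) \<le> nm x" using mn_mono[OF nm] by metis
  moreover have "0 \<le> x$i" using x by (simp add: less_eq_vec_def)
  ultimately show ?thesis by (simp add: isn_scale[OF mn_norm[OF nm]])
qed

definition wv :: "(real^'n \<Rightarrow> real) \<Rightarrow> real^'n" where
  "wv nm = (\<chi> i. 1 / nm (axis i 1))"

lemma le_wv: assumes nm: "monotone_norm nm" and x: "0 \<le> x"
  shows "x \<le> nm x *\<^sub>R wv nm"
  unfolding less_eq_vec_def wv_def
proof
  fix i
  have "x $ i * nm (axis i 1) \<le> nm x" by (rule comp_le[OF nm x])
  then show "x $ i \<le> (nm x *\<^sub>R (\<chi> i. 1 / nm (axis i 1))) $ i"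
    using axis_pos[OF nm, of i] by (simp add: field_simps)
qed

lemma cross_norm: assumes na: "monotone_norm na" and nb: "monotone_norm nb" and x: "0 \<le> x"
  shows "nb x \<le> na x * nb (wv na)"
proof -
  have "nb x \<le> nb (na x *\<^sub>R wv na)" using mn_mono[OF nb x le_wv[OF na x]] .
  also have "\<dots> = na x * nb (wv na)"
    using isn_scale[OF mn_norm[OF nb]] isn_nonneg[OF mn_norm[OF na]] by simp
  finally show ?thesis .
qed

lemma box_fix:
  fixes F :: "real^'n \<Rightarrow> real^'n"
  assumes q: "0 \<le> q" and cont: "continuous_on {0..q} F" and into: "\<And>p. 0 \<le> p \<Longrightarrow> p \<le> q \<Longrightarrow> 0 \<le> F p \<and> F p \<le> q"
  shows "\<exists>p. 0 \<le> p \<and> p \<le> q \<and> F p = p"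
proof -
  have "compact {0..q}" "convex {0..q}" "{0..q} \<noteq> {}"
    using q by (auto simp: interval_cbox_cart[symmetric] simp del: atLeastAtMost_iff)
  moreover have "F \<in> {0..q} \<rightarrow> {0..q}" using into by auto
  ultimately obtain p where "p \<in> {0..q}" "F p = p" using brouwer[OF _ _ _ cont] by metis
  then show ?thesis by auto
qed

lemma fix_pos: assumes T: "std_interference_map T" and p: "0 \<le> p" "p = c *\<^sub>R T p" "0 < c"
  shows "0 < p $ i"
proof -
  have "p $ i = c * T p $ i" using arg_cong[OF p(2), of "\<lambda>v. v $ i"] by simp
  then show ?thesis using sim_pos[OF T p(1)] p(3) by simp
qed

lemma compare:
  fixes T :: "real^'n \<Rightarrow> real^'n"
  assumes T: "std_interference_map T"
    and p: "0 \<le> p" "p = c *\<^sub>R T p" "0 < c"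
    and p': "0 \<le> p'" "p' = c' *\<^sub>R T p'" "0 < c'"
    and cc: "c \<le> c'"
  shows "p \<le> (c / c') *\<^sub>R p'"
proof -
  have pp: "\<And>i. 0 < p' $ i" using fix_pos[OF T p'] .
  have pe: "p $ i = c * T p $ i" for i using arg_cong[OF p(2), of "\<lambda>v. v $ i"] by simp
  have pe': "p' $ i = c' * T p' $ i" for i using arg_cong[OF p'(2), of "\<lambda>v. v $ i"] by simp
  define s where "s = Max (range (\<lambda>i. p$i / p'$i))"
  have fin: "finite (range (\<lambda>i. p$i / p'$i))" by simp
  have "s \<in> range (\<lambda>i. p$i / p'$i)" unfolding s_def by (rule Max_in[OF fin]) simp
  then obtain j where sj: "s = p$j / p'$j" by blast
  have sge: "p$i / p'$i \<le> s" for i unfolding s_def by (rule Max_ge[OF fin]) auto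
  have ple: "p \<le> s *\<^sub>R p'" unfolding less_eq_vec_def
  proof
    fix i show "p $ i \<le> (s *\<^sub>R p') $ i" using sge[of i] pp[of i] by (simp add: field_simps)
  qed
  have s0: "0 \<le> s" using sj p(1) pp[of j] by (simp add: less_eq_vec_def)
  have pj: "p $ j = s * p' $ j" using sj pp[of j] by simp
  have s1: "s \<le> 1"
  proof (rule ccontr)
    assume "\<not> s \<le> 1" then have s1: "1 < s" by simp
    have "p $ j = c * T p $ j" by (rule pe)
    also have "\<dots> \<le> c * T (s *\<^sub>R p') $ j"
      using sim_mono[OF T p(1) ple] p(3) by simp
    also have "\<dots> < c * (s * T p' $ j)"
      using sim_scal_strict[OF T p'(1) s1] p(3) by simp
    also have "\<dots> \<le> c' * (s * T p' $ j)"
      using cc s0 sim_pos[OF T p'(1), of j] by (intro mult_right_mono) auto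
    also have "\<dots> = s * p' $ j" using pe' by simp
    finally show False using pj by simp
  qed
  have "s *\<^sub>R p' \<le> p'" unfolding less_eq_vec_def
  proof
    fix i show "(s *\<^sub>R p') $ i \<le> p' $ i" using s1 s0 pp[of i]
      by (simp add: mult_left_le_one_le)
  qed
  then have Tle: "T p $ j \<le> T p' $ j" using sim_mono[OF T p(1)] ple by (meson order_trans)
  have "s * p' $ j \<le> c * T p' $ j" using pj pe[of j] Tle p(3) by (metis mult_left_mono less_imp_le)
  also have "\<dots> = (c / c') * p' $ j" using pe'[of j] p'(3) by simp
  finally have "s * p' $ j \<le> (c / c') * p' $ j" .
  then have "s \<le> c / c'" using mult_le_cancel_right_pos[of "p'$j" s "c/c'"] pp[of j] by simp
  then have "s *\<^sub>R p' \<le> (c / c') *\<^sub>R p'" unfolding less_eq_vec_def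
  proof (intro allI)
    fix i assume "s \<le> c / c'"
    then have "s * p' $ i \<le> (c / c') * p' $ i" using pp[of i] by (intro mult_right_mono) auto
    then show "(s *\<^sub>R p') $ i \<le> ((c / c') *\<^sub>R p') $ i" by simp
  qed
  then show ?thesis using ple by (rule order_trans[rotated])
qed

lemma exist_sol:
  fixes T :: "real^'n \<Rightarrow> real^'n"
  assumes T: "std_interference_map T" and Tc: "continuous_on {x. 0 \<le> x} T"
    and na: "monotone_norm na" and pb: "0 < pb"
  shows "\<exists>p c. feasible T na pb p c \<and> na p = pb"
proof -
  define q where "q = pb *\<^sub>R wv na"
  define F where "F = (\<lambda>p. (pb / na (T p)) *\<^sub>R T p)"
  have N: "is_norm na" by (rule mn_norm[OF na])
  have naT: "0 < na (T p)" if "0 \<le> p" for p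
    using isn_pos[OF N] sim_pos[OF T that] by (metis less_irrefl zero_index)
  have F0: "0 \<le> F p" and naF: "na (F p) = pb" if "0 \<le> p" for p
  proof -
    show "0 \<le> F p" unfolding F_def using sim_pos_vec[OF T that] naT[OF that] pb
      by (simp add: less_eq_vec_def)
    show "na (F p) = pb" unfolding F_def using isn_scale[OF N] naT[OF that] pb by simp
  qed
  have wv0: "0 \<le> wv na" unfolding wv_def less_eq_vec_def using axis_pos[OF na]
    by (simp add: less_imp_le)
  have q0: "0 \<le> q" unfolding q_def using wv0 pb by (simp add: less_eq_vec_def)
  have cT: "continuous_on {0..q} T" by (rule continuous_on_subset[OF Tc]) auto
  have cN: "continuous_on {0..q} (\<lambda>p. na (T p))"
    using continuous_on_compose2[OF isn_cont[OF N] cT] by auto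
  have cF: "continuous_on {0..q} F" unfolding F_def
  proof -
    have nz: "\<forall>p\<in>{0..q}. na (T p) \<noteq> 0" by (metis atLeastAtMost_iff less_irrefl naT)
    have "continuous_on {0..q} (\<lambda>p. pb / na (T p))"
      by (rule continuous_on_divide[OF continuous_on_const cN nz])
    then show "continuous_on {0..q} (\<lambda>p. (pb / na (T p)) *\<^sub>R T p)"
      by (rule continuous_on_scaleR[OF _ cT])
  qed
  have into: "0 \<le> F p \<and> F p \<le> q" if "0 \<le> p" "p \<le> q" for p
    using F0[OF that(1)] le_wv[OF na F0[OF that(1)]] naF[OF that(1)] unfolding q_def by simp
  obtain p where p: "0 \<le> p" "p \<le> q" "F p = p" using box_fix[OF q0 cF into] by blast
  define c where "c = pb / na (T p)"
  have "feasible T na pb p c" unfolding feasible_def c_def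
    using p naT[OF p(1)] pb naF[OF p(1)] unfolding F_def by auto
  moreover have "na p = pb" using naF[OF p(1)] p(3) by simp
  ultimately show ?thesis by blast
qed

lemma opt_sol:
  fixes T :: "real^'n \<Rightarrow> real^'n"
  assumes T: "std_interference_map T" and Tc: "continuous_on {x. 0 \<le> x} T"
    and na: "monotone_norm na" and pb: "0 < pb"
  shows "feasible T na pb (PowV T na pb) (Util T na pb) \<and> na (PowV T na pb) = pb
     \<and> (\<forall>p c. feasible T na pb p c \<longrightarrow> c \<le> Util T na pb)"
proof -
  have N: "is_norm na" by (rule mn_norm[OF na])
  obtain p c where f: "feasible T na pb p c" and np: "na p = pb" using exist_sol[OF T Tc na pb] by blast
  have opt: "c' \<le> c" if f': "feasible T na pb p' c'" for p' c'
  proof (rule ccontr)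
    assume "\<not> c' \<le> c" then have cc: "c < c'" by simp
    have le: "p \<le> (c / c') *\<^sub>R p'" using compare[OF T _ _ _ _ _ _ less_imp_le[OF cc]] f f'
      unfolding feasible_def by blast
    have "0 < c" using f unfolding feasible_def by simp
    have "na p \<le> na ((c / c') *\<^sub>R p')" using mn_mono[OF na _ le] f unfolding feasible_def by blast
    also have "\<dots> = (c / c') * na p'" using isn_scale[OF N] \<open>0 < c\<close> cc by simp
    also have "\<dots> \<le> (c / c') * pb" using f' \<open>0 < c\<close> cc unfolding feasible_def
      by (intro mult_left_mono) auto
    also have "\<dots> < pb" using \<open>0 < c\<close> cc pb by (simp add: field_simps)
    finally show False using np by simp
  qed
  have os: "opt_solution T na pb (p, c)" unfolding opt_solution_def using f opt by auto
  have un: "s = (p, c)" if "opt_solution T na pb s" for s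
  proof -
    obtain p' c' where s: "s = (p', c')" by fastforce
    have f': "feasible T na pb p' c'" and o': "\<forall>p c. feasible T na pb p c \<longrightarrow> c \<le> c'"
      using that s unfolding opt_solution_def by auto
    have "c = c'" using opt[OF f'] o' f by (meson antisym)
    then have "p \<le> p'" "p' \<le> p"
      using compare[OF T, of p c p' c'] compare[OF T, of p' c' p c] f f' unfolding feasible_def by auto
    then show ?thesis using s \<open>c = c'\<close> by auto
  qed
  have "(THE s. opt_solution T na pb s) = (p, c)" using os un by (rule the_equality)
  then have "PowV T na pb = p" "Util T na pb = c" unfolding PowV_def Util_def by auto
  then show ?thesis using f np opt by auto
qed

lemma decr:
  assumes T: "std_interference_map T" and x: "0 \<le> x" and h0: "0 < h0" "h0 \<le> h"
  shows "T (h *\<^sub>R x) $ i / h \<le> T (h0 *\<^sub>R x) $ i / h0"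
proof -
  have x0: "0 \<le> h0 *\<^sub>R x" using x h0 by (simp add: less_eq_vec_def)
  have e: "h *\<^sub>R x = (h / h0) *\<^sub>R (h0 *\<^sub>R x)" using h0 by simp
  have "T (h *\<^sub>R x) $ i \<le> (h / h0) * T (h0 *\<^sub>R x) $ i"
    unfolding e by (rule sim_scal[OF T x0]) (use h0 in simp)
  then show ?thesis using h0 by (simp add: field_simps)
qed

lemma gval:
  assumes "0 \<le> h *\<^sub>R y" "0 < h"
  shows "(\<lambda>(h, y). ext_fun f (h *\<^sub>R y) / ereal h) (h, y) = ereal (f (h *\<^sub>R y) / h)"
  using assms by (simp add: ext_fun_def)

lemma asym_upper:
  assumes T: "std_interference_map T" and x: "0 \<le> x" and h0: "0 < h0"
  shows "asymptotic_fun (\<lambda>y. T y $ i) x \<le> ereal (T (h0 *\<^sub>R x) $ i / h0)"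
  unfolding asymptotic_fun_def Liminf_def
proof (rule SUP_least)
  fix P assume "P \<in> {P. eventually P ((at_top :: real filter) \<times>\<^sub>F nhds x)}"
  then obtain Pf Pg where ef: "eventually Pf at_top" and eg: "eventually Pg (nhds x)"
    and PP: "\<forall>h y. Pf h \<longrightarrow> Pg y \<longrightarrow> P (h, y)" by (auto simp: eventually_prod_filter)
  obtain N where N: "\<forall>n\<ge>N. Pf n" using ef unfolding eventually_at_top_linorder by blast
  define h where "h = max N h0"
  have hP: "P (h, x)" using PP N eventually_nhds_x_imp_x[OF eg] unfolding h_def by auto
  have hpos: "0 < h" "h0 \<le> h" unfolding h_def using h0 by auto
  have hx: "0 \<le> h *\<^sub>R x" using x hpos by (simp add: less_eq_vec_def)
  have "Inf ((\<lambda>(h, y). ext_fun (\<lambda>y. T y $ i) (h *\<^sub>R y) / ereal h) ` Collect P)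
      \<le> (\<lambda>(h, y). ext_fun (\<lambda>y. T y $ i) (h *\<^sub>R y) / ereal h) (h, x)"
    by (rule Inf_lower) (use hP in auto)
  also have "\<dots> = ereal (T (h *\<^sub>R x) $ i / h)" by (rule gval[OF hx hpos(1)])
  also have "\<dots> \<le> ereal (T (h0 *\<^sub>R x) $ i / h0)" using decr[OF T x h0 hpos(2)] by simp
  finally show "Inf ((\<lambda>(h, y). ext_fun (\<lambda>y. T y $ i) (h *\<^sub>R y) / ereal h) ` Collect P)
      \<le> ereal (T (h0 *\<^sub>R x) $ i / h0)" .
qed

lemma asym_lower:
  assumes T: "std_interference_map T" and x: "\<forall>j. 0 < x $ j" and d: "0 < d" "d < 1"
    and K: "\<forall>h>0. K \<le> T (h *\<^sub>R x) $ i / h"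
  shows "ereal ((1 - d) * K) \<le> asymptotic_fun (\<lambda>y. T y $ i) x"
  unfolding asymptotic_fun_def
proof (rule Liminf_bounded)
  have eg: "eventually (\<lambda>y. \<forall>j. (1 - d) * x $ j < y $ j) (nhds x)"
  proof (rule eventually_all_finite)
    fix j
    have "((\<lambda>y. y $ j) \<longlongrightarrow> x $ j) (nhds x)" by (rule tendsto_vec_nth[OF filterlim_ident])
    moreover have "(1 - d) * x $ j < x $ j" using x d by (simp add: algebra_simps)
    ultimately show "eventually (\<lambda>y. (1 - d) * x $ j < y $ j) (nhds x)" by (rule order_tendstoD(1))
  qed
  have ef: "eventually (\<lambda>h::real. 0 < h) at_top" by (rule eventually_gt_at_top)
  show "eventually (\<lambda>n. ereal ((1 - d) * K) \<le> (\<lambda>(h, y). ext_fun (\<lambda>y. T y $ i) (h *\<^sub>R y) / ereal h) n)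
     (at_top \<times>\<^sub>F nhds x)"
    unfolding eventually_prod_filter
  proof (intro exI conjI allI impI)
    show "eventually (\<lambda>h::real. 0 < h) at_top" by (rule ef)
    show "eventually (\<lambda>y. \<forall>j. (1 - d) * x $ j < y $ j) (nhds x)" by (rule eg)
    fix h :: real and y assume h: "0 < h" and y: "\<forall>j. (1 - d) * x $ j < y $ j"
    have xd: "0 \<le> ((1 - d) * h) *\<^sub>R x" using x d h by (simp add: less_eq_vec_def less_imp_le)
    have le1: "((1 - d) * h) *\<^sub>R x \<le> h *\<^sub>R y" unfolding less_eq_vec_def
    proof
      fix j
      have "h * ((1 - d) * x $ j) \<le> h * y $ j" using y h by (simp add: less_imp_le mult_left_mono)
      then show "(((1 - d) * h) *\<^sub>R x) $ j \<le> (h *\<^sub>R y) $ j" by (simp add: algebra_simps)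
    qed
    have hy: "0 \<le> h *\<^sub>R y" using xd le1 by (rule order_trans)
    have h': "0 < (1 - d) * h" using d h by simp
    have "(1 - d) * K \<le> (1 - d) * (T (((1 - d) * h) *\<^sub>R x) $ i / ((1 - d) * h))"
      using K h' d by (intro mult_left_mono) auto
    also have "\<dots> = T (((1 - d) * h) *\<^sub>R x) $ i / h"
    proof -
      have "(1 - d) * (a / ((1 - d) * h)) = a / h" for a using d h by (simp add: field_simps)
      then show ?thesis by blast
    qed
    also have "\<dots> \<le> T (h *\<^sub>R y) $ i / h" using sim_mono[OF T xd le1] h by (simp add: divide_right_mono)
    finally have "ereal ((1 - d) * K) \<le> ereal (T (h *\<^sub>R y) $ i / h)" by simp
    then show "ereal ((1 - d) * K) \<le> (\<lambda>(h, y). ext_fun (\<lambda>y. T y $ i) (h *\<^sub>R y) / ereal h) (h, y)"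
      using gval[OF hy h] by simp
  qed
qed

lemma Afin:
  assumes sol: "asymptotic_map T xinf = laminf *\<^sub>R xinf" and pos: "\<forall>i. 0 < xinf $ i" "0 < laminf"
  shows "asymptotic_fun (\<lambda>y. T y $ i) xinf = ereal (laminf * xinf $ i)"
proof -
  have "real_of_ereal (asymptotic_fun (\<lambda>y. T y $ i) xinf) = laminf * xinf $ i"
    using arg_cong[OF sol, of "\<lambda>v. v $ i"] unfolding asymptotic_map_def by simp
  moreover have "laminf * xinf $ i \<noteq> 0" using pos(1)[rule_format, of i] pos(2) by simp
  ultimately show ?thesis by (cases "asymptotic_fun (\<lambda>y. T y $ i) xinf") auto
qed

lemma eig_bound:
  fixes T :: "real^'n \<Rightarrow> real^'n"
  assumes T: "std_interference_map T"
    and sol: "asymptotic_map T xinf = laminf *\<^sub>R xinf" and pos: "\<forall>i. 0 < xinf $ i" "0 < laminf"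
    and p: "0 \<le> p" "p = c *\<^sub>R T p" "0 < c"
  shows "c \<le> 1 / laminf"
proof -
  have pp: "0 < p $ i" for i using fix_pos[OF T p] .
  have pe: "p $ i = c * T p $ i" for i using arg_cong[OF p(2), of "\<lambda>v. v $ i"] by simp
  define t where "t = Max (range (\<lambda>i. xinf$i / p$i))"
  have fin: "finite (range (\<lambda>i. xinf$i / p$i))" by simp
  have "t \<in> range (\<lambda>i. xinf$i / p$i)" unfolding t_def by (rule Max_in[OF fin]) simp
  then obtain j where tj: "t = xinf$j / p$j" by blast
  have tge: "xinf$i / p$i \<le> t" for i unfolding t_def by (rule Max_ge[OF fin]) auto
  have t0: "0 < t" using tj pos pp[of j] by simp
  have le: "(1 / t) *\<^sub>R xinf \<le> p" unfolding less_eq_vec_def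
  proof
    fix i show "((1 / t) *\<^sub>R xinf) $ i \<le> p $ i" using tge[of i] pp[of i] t0 by (simp add: field_simps)
  qed
  have x0: "0 \<le> xinf" using pos by (simp add: less_eq_vec_def less_imp_le)
  have x0': "0 \<le> (1 / t) *\<^sub>R xinf" using x0 t0 by (simp add: less_eq_vec_def)
  have "ereal (laminf * xinf $ j) \<le> ereal (T ((1 / t) *\<^sub>R xinf) $ j / (1 / t))"
    using asym_upper[OF T x0, of "1 / t" j] t0 Afin[OF sol pos] by simp
  then have "laminf * xinf $ j \<le> t * T ((1 / t) *\<^sub>R xinf) $ j" by (simp add: mult.commute)
  also have "\<dots> \<le> t * T p $ j" using sim_mono[OF T x0' le] t0 by simp
  also have "\<dots> = t * p $ j / c" using pe[of j] p(3) by simp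
  also have "\<dots> = xinf $ j / c" using tj pp[of j] by simp
  finally have "laminf * xinf $ j \<le> xinf $ j / c" .
  then have "laminf \<le> 1 / c" using pos(1) p(3) by (simp add: field_simps)
  then show ?thesis using pos(2) p(3) by (simp add: field_simps)
qed

lemma eig_ev:
  fixes T :: "real^'n \<Rightarrow> real^'n"
  assumes T: "std_interference_map T"
    and sol: "asymptotic_map T xinf = laminf *\<^sub>R xinf" and pos: "\<forall>i. 0 < xinf $ i" "0 < laminf"
    and e: "0 < e"
  shows "eventually (\<lambda>h. \<forall>i. T (h *\<^sub>R xinf) $ i / h < (laminf + e) * xinf $ i) at_top"
proof (rule eventually_all_finite)
  fix i
  have x0: "0 \<le> xinf" using pos by (simp add: less_eq_vec_def less_imp_le)
  define K where "K = (laminf + e) * xinf $ i"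
  have "\<exists>h0>0. T (h0 *\<^sub>R xinf) $ i / h0 < K"
  proof (rule ccontr)
    assume "\<not> ?thesis"
    then have Kh: "\<forall>h>0. K \<le> T (h *\<^sub>R xinf) $ i / h" by (meson not_le not_less)
    define d where "d = e / (2 * (laminf + e))"
    have d: "0 < d" "d < 1" unfolding d_def using e pos by (auto simp: field_simps)
    have "ereal ((1 - d) * K) \<le> ereal (laminf * xinf $ i)"
      using asym_lower[OF T pos(1) d Kh] Afin[OF sol pos, of i] by simp
    then have "(1 - d) * K \<le> laminf * xinf $ i" by simp
    moreover have "(1 - d) * K = (laminf + e / 2) * xinf $ i"
      unfolding K_def d_def using e pos by (simp add: field_simps)
    moreover have "laminf * xinf $ i < (laminf + e / 2) * xinf $ i" using e pos(1)
      by (intro mult_strict_right_mono) auto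
    ultimately show False by simp
  qed
  then obtain h0 where h0: "0 < h0" "T (h0 *\<^sub>R xinf) $ i / h0 < K" by blast
  show "eventually (\<lambda>h. T (h *\<^sub>R xinf) $ i / h < (laminf + e) * xinf $ i) at_top"
    unfolding eventually_at_top_linorder
  proof (intro exI allI impI)
    fix h assume "h0 \<le> h"
    then show "T (h *\<^sub>R xinf) $ i / h < (laminf + e) * xinf $ i"
      using decr[OF T x0 h0(1), of h i] h0(2) unfolding K_def by simp
  qed
qed

lemma U_low:
  fixes T :: "real^'n \<Rightarrow> real^'n"
  assumes T: "std_interference_map T" and Tc: "continuous_on {x. 0 \<le> x} T"
    and na: "monotone_norm na" and nx: "na xinf = 1"
    and sol: "asymptotic_map T xinf = laminf *\<^sub>R xinf" and pos: "\<forall>i. 0 < xinf $ i" "0 < laminf"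
    and e: "0 < e"
  shows "eventually (\<lambda>pb. 1 / (laminf + e) \<le> Util T na pb) at_top"
proof -
  have "eventually (\<lambda>h. (\<forall>i. T (h *\<^sub>R xinf) $ i / h < (laminf + e) * xinf $ i) \<and> 0 < h) at_top"
    using eig_ev[OF T sol pos e] eventually_gt_at_top[of 0] by (rule eventually_conj)
  then obtain h where h: "\<forall>i. T (h *\<^sub>R xinf) $ i / h < (laminf + e) * xinf $ i" "0 < h"
    by (metis (lifting) eventually_at_top_linorder order_refl)
  define q where "q = h *\<^sub>R xinf"
  define c where "c = 1 / (laminf + e)"
  have c0: "0 < c" unfolding c_def using e pos by simp
  have x0: "0 \<le> xinf" using pos by (simp add: less_eq_vec_def less_imp_le)
  have q0: "0 \<le> q" unfolding q_def using x0 h by (simp add: less_eq_vec_def)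
  have cTq: "c *\<^sub>R T q \<le> q" unfolding less_eq_vec_def
  proof
    fix i
    have "T q $ i < (laminf + e) * xinf $ i * h" using h unfolding q_def by (simp add: field_simps)
    then show "(c *\<^sub>R T q) $ i \<le> q $ i" unfolding c_def q_def using e pos
      by (simp add: field_simps)
  qed
  have cT: "continuous_on {0..q} T" by (rule continuous_on_subset[OF Tc]) auto
  have cF: "continuous_on {0..q} (\<lambda>p. c *\<^sub>R T p)" by (intro continuous_intros cT)
  have into: "0 \<le> c *\<^sub>R T p \<and> c *\<^sub>R T p \<le> q" if "0 \<le> p" "p \<le> q" for p
  proof
    show "0 \<le> c *\<^sub>R T p" using sim_pos_vec[OF T that(1)] c0 by (simp add: less_eq_vec_def)
    have "c *\<^sub>R T p \<le> c *\<^sub>R T q" using sim_mono[OF T that] c0 by (simp add: less_eq_vec_def)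
    then show "c *\<^sub>R T p \<le> q" using cTq by (rule order_trans)
  qed
  obtain p where p: "0 \<le> p" "p \<le> q" "c *\<^sub>R T p = p" using box_fix[OF q0 cF into] by blast
  have nq: "na q = h" unfolding q_def using isn_scale[OF mn_norm[OF na]] nx h by simp
  have "na p \<le> h" using mn_mono[OF na p(1) p(2)] nq by simp
  show ?thesis unfolding eventually_at_top_linorder
  proof (intro exI allI impI)
    fix pb assume pb: "h \<le> pb"
    then have "feasible T na pb p c" unfolding feasible_def using p c0 \<open>na p \<le> h\<close> by auto
    then show "1 / (laminf + e) \<le> Util T na pb" using opt_sol[OF T Tc na] pb h c_def by auto
  qed
qed

lemma pt_facts:
  fixes T :: "real^'n \<Rightarrow> real^'n"
  assumes T: "std_interference_map T" and Tc: "continuous_on {x. 0 \<le> x} T"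
    and na: "monotone_norm na" and nb: "monotone_norm nb"
    and sol: "asymptotic_map T xinf = laminf *\<^sub>R xinf" and pos: "\<forall>i. 0 < xinf $ i" "0 < laminf"
    and pb: "0 < pb"
  shows "0 < Util T na pb" "Util T na pb \<le> 1 / laminf" "Util T na pb \<le> pb / na (T 0)"
    "0 < na (T 0)" "0 < nb (T 0)"
    "EE T na nb pb = 1 / nb (T (PowV T na pb))"
    "nb (T 0) \<le> nb (T (PowV T na pb))"
    "0 \<le> PowV T na pb" "na (PowV T na pb) = pb" "0 < nb (PowV T na pb)"
    "EE T na nb pb = Util T na pb / nb (PowV T na pb)"
    "0 \<le> PowV T na pb $ i" "PowV T na pb $ i \<le> pb * wv na $ i"
proof -
  define U where "U = Util T na pb"
  define P where "P = PowV T na pb"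
  have o: "feasible T na pb P U" "na P = pb" using opt_sol[OF T Tc na pb] unfolding U_def P_def by auto
  have P0: "0 \<le> P" and U0: "0 < U" and PE: "P = U *\<^sub>R T P" using o unfolding feasible_def by auto
  show "0 < Util T na pb" using U0 U_def by simp
  show "Util T na pb \<le> 1 / laminf" using eig_bound[OF T sol pos P0 PE U0] U_def by simp
  have NA: "is_norm na" and NB: "is_norm nb" using na nb by (auto intro: mn_norm)
  have T00: "0 \<le> T 0" by (rule sim_pos_vec[OF T]) simp
  have T0nz: "T 0 \<noteq> 0" using sim_pos[OF T order_refl, of undefined] by (metis less_irrefl zero_index)
  show na0: "0 < na (T 0)" by (rule isn_pos[OF NA T0nz])
  show nb0: "0 < nb (T 0)" by (rule isn_pos[OF NB T0nz])
  have TT: "T 0 \<le> T P" using sim_mono[OF T order_refl P0] by (simp add: less_eq_vec_def)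
  have "U *\<^sub>R T 0 \<le> P"
  proof -
    have "U *\<^sub>R T 0 \<le> U *\<^sub>R T P" using TT U0 by (simp add: less_eq_vec_def)
    then show ?thesis using PE by simp
  qed
  then have "na (U *\<^sub>R T 0) \<le> na P" using mn_mono[OF na] T00 U0 by (simp add: less_eq_vec_def)
  then have "U * na (T 0) \<le> pb" using isn_scale[OF NA] U0 o(2) by simp
  then show "Util T na pb \<le> pb / na (T 0)" using na0 U_def by (simp add: field_simps)
  have nbTP: "nb (T 0) \<le> nb (T P)" using mn_mono[OF nb T00 TT] .
  then show "nb (T 0) \<le> nb (T (PowV T na pb))" using P_def by simp
  have nbP: "nb P = U * nb (T P)" using arg_cong[OF PE, of nb] isn_scale[OF NB] U0 by simp
  show "EE T na nb pb = 1 / nb (T (PowV T na pb))" unfolding EE_def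
    using nbP U0 nbTP nb0 U_def P_def by simp
  show "EE T na nb pb = Util T na pb / nb (PowV T na pb)" unfolding EE_def ..
  show "0 \<le> PowV T na pb" "na (PowV T na pb) = pb" using P0 o P_def by auto
  show "0 < nb (PowV T na pb)" using nbP U0 nbTP nb0 P_def by simp
  show "0 \<le> PowV T na pb $ i" using P0 P_def by (simp add: less_eq_vec_def)
  show "PowV T na pb $ i \<le> pb * wv na $ i" using le_wv[OF na P0] o(2) P_def by (simp add: less_eq_vec_def)
qed

theorem proposition3:
  fixes T :: "real^'n \<Rightarrow> real^'n" and na nb :: "real^'n \<Rightarrow> real"
    and xinf :: "real^'n" and laminf :: real
  assumes T_std: "std_interference_map T"
    and T_cont: "continuous_on {x. 0 \<le> x} T"
    and na: "monotone_norm na" and nb: "monotone_norm nb"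
    and sol: "0 \<le> xinf" "0 \<le> laminf" "asymptotic_map T xinf = laminf *\<^sub>R xinf" "na xinf = 1"
    and uniq: "\<And>x lam. 0 \<le> x \<Longrightarrow> 0 \<le> lam \<Longrightarrow> asymptotic_map T x = lam *\<^sub>R x \<Longrightarrow> na x = 1
                 \<Longrightarrow> x = xinf \<and> lam = laminf"
    and pos: "\<forall>i. 0 < xinf $ i" "0 < laminf"
  shows
    "((SUP pb\<in>{0<..}. Util T na pb) = 1 / laminf \<and> (Util T na \<longlongrightarrow> 1 / laminf) at_top \<and>
      (SUP pb\<in>{0<..}. EE T na nb pb) = 1 / nb (T 0) \<and> (EE T na nb \<longlongrightarrow> 1 / nb (T 0)) (at_right 0))
   \<and> (\<forall>pb>0. (pb \<le> na (T 0) / laminf \<longrightarrow> Util T na pb \<le> pb / na (T 0)) \<and>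
             (pb > na (T 0) / laminf \<longrightarrow> Util T na pb \<le> 1 / laminf))
   \<and> (\<forall>\<alpha>>0. (\<forall>x. na x \<le> \<alpha> * nb x) \<longrightarrow>
        (\<forall>pb>0. EE T na nb pb \<le> min (1 / nb (T 0)) (\<alpha> / (laminf * pb))))
   \<and> Util T na \<in> \<Theta>[at_top](\<lambda>_. 1) \<and> EE T na nb \<in> \<Theta>[at_top](\<lambda>pb. 1 / pb)"
proof -
  note F = pt_facts[OF T_std T_cont na nb sol(3) pos]
  note UL = U_low[OF T_std T_cont na sol(4) sol(3) pos]
  define U where "U = Util T na"
  define E where "E = EE T na nb"
  have evpos: "eventually (\<lambda>pb::real. 0 < pb) at_top" by (rule eventually_gt_at_top)
  have limU: "(U \<longlongrightarrow> 1 / laminf) at_top"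
  proof (rule order_tendstoI)
    fix a assume a: "a < 1 / laminf"
    show "eventually (\<lambda>pb. a < U pb) at_top"
    proof (cases "a \<le> 0")
      case True
      show ?thesis using evpos by eventually_elim (use F(1) True U_def in force)
    next
      case False
      define e where "e = (1 / a - laminf) / 2"
      have "laminf < 1 / a" using a False pos(2) by (simp add: field_simps)
      then have e0: "0 < e" unfolding e_def by simp
      have al: "a * laminf < 1" using \<open>laminf < 1 / a\<close> False by (simp add: field_simps)
      have "a * (laminf + e) = (a * laminf + 1) / 2" unfolding e_def using False by (simp add: field_simps)
      then have "a * (laminf + e) < 1" using al by simp
      then have "a < 1 / (laminf + e)" using e0 pos(2) by (simp add: field_simps)
      then show ?thesis using UL[OF e0] by (auto elim!: eventually_mono simp: U_def)
    qed
  next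
    fix a assume a: "1 / laminf < a"
    show "eventually (\<lambda>pb. U pb < a) at_top"
      using evpos by eventually_elim (use F(2) a U_def in force)
  qed
  have bddU: "bdd_above (U ` {0<..})" by (rule bdd_aboveI2[of _ _ "1 / laminf"]) (use F(2) U_def in auto)
  have supU: "(SUP pb\<in>{0<..}. U pb) = 1 / laminf"
  proof (rule antisym)
    show "(SUP pb\<in>{0<..}. U pb) \<le> 1 / laminf"
      by (rule cSUP_least) (use F(2) U_def in auto)
    show "1 / laminf \<le> (SUP pb\<in>{0<..}. U pb)"
    proof (rule tendsto_upperbound[OF limU])
      show "eventually (\<lambda>pb. U pb \<le> (SUP pb\<in>{0<..}. U pb)) at_top"
        using evpos by (rule eventually_mono) (rule cSUP_upper[OF _ bddU], simp)
    qed simp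
  qed
  have Ptend: "((\<lambda>pb. PowV T na pb) \<longlongrightarrow> 0) (at_right 0)"
  proof (rule vec_tendstoI)
    fix i
    have up: "((\<lambda>pb. pb * wv na $ i) \<longlongrightarrow> 0) (at_right (0::real))"
      using tendsto_mult[OF tendsto_ident_at[of 0 "{0<..}"] tendsto_const[of "wv na $ i"]] by simp
    show "((\<lambda>pb. PowV T na pb $ i) \<longlongrightarrow> 0 $ i) (at_right 0)"
      unfolding zero_index
      by (rule tendsto_sandwich[OF _ _ tendsto_const up])
        (use eventually_at_right_less[of "0::real"] in \<open>auto elim!: eventually_mono intro: F(12) F(13)\<close>)
  qed
  have evr: "eventually (\<lambda>pb::real. 0 < pb) (at_right 0)" by (rule eventually_at_right_less)
  have TP: "((\<lambda>pb. T (PowV T na pb)) \<longlongrightarrow> T 0) (at_right 0)"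
    by (rule continuous_on_tendsto_compose[OF T_cont Ptend])
      (use evr in \<open>auto elim!: eventually_mono intro: F(8)\<close>)
  have nbTP: "((\<lambda>pb. nb (T (PowV T na pb))) \<longlongrightarrow> nb (T 0)) (at_right 0)"
    by (rule continuous_on_tendsto_compose[OF isn_cont[OF mn_norm[OF nb]] TP]) auto
  have limE': "((\<lambda>pb. 1 / nb (T (PowV T na pb))) \<longlongrightarrow> 1 / nb (T 0)) (at_right 0)"
    by (rule tendsto_divide[OF tendsto_const nbTP]) (use F(5)[OF zero_less_one] in simp)
  have limE: "(E \<longlongrightarrow> 1 / nb (T 0)) (at_right 0)"
    by (rule Lim_transform_eventually[OF limE']) (use evr in \<open>auto elim!: eventually_mono simp: F(6) E_def\<close>)
  have Ele: "E pb \<le> 1 / nb (T 0)" if "0 < pb" for pb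
  proof -
    have "1 / nb (T (PowV T na pb)) \<le> 1 / nb (T 0)"
      using F(7)[OF that] F(5)[OF that] by (intro divide_left_mono) auto
    then show ?thesis using F(6)[OF that] E_def by simp
  qed
  have bddE: "bdd_above (E ` {0<..})" by (rule bdd_aboveI2[of _ _ "1 / nb (T 0)"]) (use Ele in auto)
  have supE: "(SUP pb\<in>{0<..}. E pb) = 1 / nb (T 0)"
  proof (rule antisym)
    show "(SUP pb\<in>{0<..}. E pb) \<le> 1 / nb (T 0)"
      by (rule cSUP_least) (use Ele in auto)
    show "1 / nb (T 0) \<le> (SUP pb\<in>{0<..}. E pb)"
    proof (rule tendsto_upperbound[OF limE])
      show "eventually (\<lambda>pb. E pb \<le> (SUP pb\<in>{0<..}. E pb)) (at_right 0)"
        using evr by (rule eventually_mono) (rule cSUP_upper[OF _ bddE], simp)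
    qed simp
  qed
  have partii: "\<forall>pb>0. (pb \<le> na (T 0) / laminf \<longrightarrow> Util T na pb \<le> pb / na (T 0)) \<and>
             (pb > na (T 0) / laminf \<longrightarrow> Util T na pb \<le> 1 / laminf)"
    using F(2,3) by blast
  have Eal: "E pb \<le> \<alpha> / (laminf * pb)" if al: "\<forall>x. na x \<le> \<alpha> * nb x" "0 < \<alpha>" and pb: "0 < pb" for \<alpha> pb
  proof -
    have "pb \<le> \<alpha> * nb (PowV T na pb)" using al(1) F(9)[OF pb] by metis
    then have "pb / \<alpha> \<le> nb (PowV T na pb)" using al(2) by (simp add: field_simps)
    have "E pb = Util T na pb / nb (PowV T na pb)" using F(11)[OF pb] E_def by simp
    also have "\<dots> \<le> (1 / laminf) / nb (PowV T na pb)"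
      using F(2)[OF pb] F(10)[OF pb] by (intro divide_right_mono) auto
    also have "\<dots> \<le> (1 / laminf) / (pb / \<alpha>)"
      using \<open>pb / \<alpha> \<le> nb (PowV T na pb)\<close> pb al(2) pos(2) F(10)[OF pb] by (intro divide_left_mono) auto
    also have "\<dots> = \<alpha> / (laminf * pb)" by simp
    finally show ?thesis .
  qed
  have partiii: "\<forall>\<alpha>>0. (\<forall>x. na x \<le> \<alpha> * nb x) \<longrightarrow>
        (\<forall>pb>0. EE T na nb pb \<le> min (1 / nb (T 0)) (\<alpha> / (laminf * pb)))"
    using Eal Ele E_def by simp
  have thU: "U \<in> \<Theta>[at_top](\<lambda>_. 1)"
  proof (rule bigthetaI)
    have b1: "norm (U x) \<le> 1 / laminf * norm (1::real)" if "0 < x" for x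
      using F(1)[OF that] F(2)[OF that] U_def by simp
    have ev1: "eventually (\<lambda>x. norm (U x) \<le> 1 / laminf * norm (1::real)) at_top"
      using evpos by (rule eventually_mono) (rule b1)
    then show "U \<in> O[at_top](\<lambda>_. 1)" by (rule bigoI)
    have b2: "norm (1::real) \<le> (laminf + 1) * norm (U x)" if "1 / (laminf + 1) \<le> U x" for x
    proof -
      have "0 < U x" using that pos(2) by (meson divide_pos_pos less_le_trans add_pos_pos zero_less_one)
      then show ?thesis using that pos(2) by (simp add: field_simps)
    qed
    have ev2: "eventually (\<lambda>x. norm (1::real) \<le> (laminf + 1) * norm (U x)) at_top"
      using UL[OF zero_less_one] by (rule eventually_mono) (rule b2, simp add: U_def)
    have "(\<lambda>_. 1) \<in> O[at_top](U)" using ev2 by (rule bigoI)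
    then show "U \<in> \<Omega>[at_top](\<lambda>_. 1)" by (simp add: bigomega_iff_bigo)
  qed
  define K1 where "K1 = na (wv nb)"
  define K2 where "K2 = nb (wv na)"
  have wpos: "0 < nm (wv nm')" if "monotone_norm nm" "monotone_norm nm'" for nm nm' :: "real^'n \<Rightarrow> real"
  proof -
    have "wv nm' $ undefined > 0" unfolding wv_def using axis_pos[OF that(2)] by simp
    then have "wv nm' \<noteq> 0" by (metis less_irrefl zero_index)
    then show ?thesis using isn_pos[OF mn_norm[OF that(1)]] by blast
  qed
  have K1: "0 < K1" unfolding K1_def by (rule wpos[OF na nb])
  have K2: "0 < K2" unfolding K2_def by (rule wpos[OF nb na])
  have thE: "E \<in> \<Theta>[at_top](\<lambda>pb. 1 / pb)"
  proof (rule bigthetaI)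
    have b1: "norm (E x) \<le> K1 / laminf * norm (1 / x)" if x: "0 < x" for x
    proof -
      have P0: "0 \<le> PowV T na x" by (rule F(8)[OF x])
      have "x \<le> nb (PowV T na x) * K1" using cross_norm[OF nb na P0] F(9)[OF x] K1_def by simp
      then have lb: "x / K1 \<le> nb (PowV T na x)" using K1 by (simp add: field_simps)
      have "E x = Util T na x / nb (PowV T na x)" using F(11)[OF x] E_def by simp
      also have "\<dots> \<le> (1 / laminf) / nb (PowV T na x)"
        using F(2)[OF x] F(10)[OF x] by (intro divide_right_mono) auto
      also have "\<dots> \<le> (1 / laminf) / (x / K1)"
        using lb x K1 pos(2) F(10)[OF x] by (intro divide_left_mono) auto
      also have "\<dots> = K1 / laminf * (1 / x)" by simp
      finally have "E x \<le> K1 / laminf * (1 / x)" .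
      moreover have "0 \<le> E x" using F(1)[OF x] F(10)[OF x] F(11)[OF x] E_def by simp
      ultimately show ?thesis using x by simp
    qed
    have ev1: "eventually (\<lambda>x. norm (E x) \<le> K1 / laminf * norm (1 / x)) at_top"
      using evpos by (rule eventually_mono) (rule b1)
    then show "E \<in> O[at_top](\<lambda>pb. 1 / pb)" by (rule bigoI)
    have b2: "norm (1 / x) \<le> ((laminf + 1) * K2) * norm (E x)"
      if x: "0 < x" and u: "1 / (laminf + 1) \<le> Util T na x" for x
    proof -
      have P0: "0 \<le> PowV T na x" by (rule F(8)[OF x])
      have ub: "nb (PowV T na x) \<le> x * K2" using cross_norm[OF na nb P0] F(9)[OF x] K2_def by simp
      have "(1 / (laminf + 1)) / (x * K2) \<le> Util T na x / (x * K2)"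
        using u x K2 by (intro divide_right_mono) auto
      also have "\<dots> \<le> Util T na x / nb (PowV T na x)"
        using ub F(1)[OF x] F(10)[OF x] by (intro divide_left_mono) auto
      also have "\<dots> = E x" using F(11)[OF x] E_def by simp
      finally have le: "(1 / (laminf + 1)) / (x * K2) \<le> E x" .
      have "1 / x = ((laminf + 1) * K2) * ((1 / (laminf + 1)) / (x * K2))"
      proof -
        have "0 < K2 * x + K2 * (laminf * x)" using x K2 pos(2) by (simp add: add_pos_pos)
        then show ?thesis using x K2 pos(2) by (simp add: field_simps)
      qed
      also have "\<dots> \<le> ((laminf + 1) * K2) * E x"
        using le K2 pos(2) by (intro mult_left_mono) auto
      finally have "1 / x \<le> ((laminf + 1) * K2) * E x" .
      moreover have "0 \<le> E x" using F(1)[OF x] F(10)[OF x] F(11)[OF x] E_def by simp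
      ultimately show ?thesis using x by simp
    qed
    have ev2: "eventually (\<lambda>x. norm (1 / x) \<le> ((laminf + 1) * K2) * norm (E x)) at_top"
      using eventually_conj[OF evpos UL[OF zero_less_one]] by (rule eventually_mono) (rule b2, auto)
    have "(\<lambda>pb. 1 / pb) \<in> O[at_top](E)" using ev2 by (rule bigoI)
    then show "E \<in> \<Omega>[at_top](\<lambda>pb. 1 / pb)" by (simp add: bigomega_iff_bigo)
  qed
  show ?thesis
    using supU limU supE limE partii partiii thU thE unfolding U_def E_def by blast
qed

end
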